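(* Let $T$ be a tournament of order $n \geq 3$. Then $\mathrm{sinv}_1(T) = \mathrm{sinv}'_1(T) = 0$ if $T$ is strong and $\mathrm{sinv}_1(T) = \mathrm{sinv}'_1(T) = 1$ otherwise. In particular, $m_1(n) = m'_1(n) = 1$ for all $n \geq 3$ and $M_1 = M'_1 = 1$.
   Context: A tournament is an orientation of a complete graph; it is strong if for every ordered pair of vertices $(u,v)$ there is a directed path from $u$ to $v$. For a digraph $D$ and $X \subseteq V(D)$, inverting $X$ means reversing the direction of every arc of $D$ with both endvertices in $X$. A digraph $D$ is $k$-arc-strong if for every partition $(V_1,V_2)$ of $V(D)$ into nonempty sets there are at least $k$ arcs from $V_1$ to $V_2$; it is $k$-strong if $|V(D)|\ge k+1$ and $D-S$ is strong for every $S\subseteq V(D)$ with $|S|<k$. $\mathrm{sinv}'_k(D)$ (resp. $\mathrm{sinv}_k(D)$) is the minimum number of sets whose successive inversion transforms $D$ into a $k$-arc-strong (resp. $k$-strong) digraph. For $n\ge 2k+1$, $m_k(n)=\max\{\mathrm{sinv}_k(T): T \text{ tournament of order } n\}$, $m'_k(n)=\max\{\mathrm{sinv}'_k(T): T \text{ tournament of order } n\}$, $M_k=\max\{\mathrm{sinv}_k(T): T \text{ tournament of order at least } 2k+1\}$, $M'_k=\max\{\mathrm{sinv}'_k(T): T \text{ tournament of order at least } 2k+1\}$. *)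

theory Defs
  imports Main "HOL-Library.Extended_Nat"
begin

definition tournament :: "'a set \<Rightarrow> ('a \<times> 'a) set \<Rightarrow> bool" where
  "tournament V A \<longleftrightarrow> finite V \<and> A \<subseteq> V \<times> V \<and> (\<forall>v. (v, v) \<notin> A) \<and>
     (\<forall>u\<in>V. \<forall>v\<in>V. u \<noteq> v \<longrightarrow> ((u, v) \<in> A \<longleftrightarrow> (v, u) \<notin> A))"

definition invert :: "('a \<times> 'a) set \<Rightarrow> 'a set \<Rightarrow> ('a \<times> 'a) set" where
  "invert A X = {(u, v). (u, v) \<in> A \<and> \<not> (u \<in> X \<and> v \<in> X)}
               \<union> {(u, v). (v, u) \<in> A \<and> u \<in> X \<and> v \<in> X}"

definition invert_seq :: "('a \<times> 'a) set \<Rightarrow> 'a set list \<Rightarrow> ('a \<times> 'a) set" where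
  "invert_seq A Xs = foldl invert A Xs"

definition strong :: "'a set \<Rightarrow> ('a \<times> 'a) set \<Rightarrow> bool" where
  "strong V A \<longleftrightarrow> (\<forall>u\<in>V. \<forall>v\<in>V. (u, v) \<in> (A \<inter> V \<times> V)\<^sup>*)"

definition arc_strong :: "nat \<Rightarrow> 'a set \<Rightarrow> ('a \<times> 'a) set \<Rightarrow> bool" where
  "arc_strong k V A \<longleftrightarrow> (\<forall>V1 V2. V1 \<noteq> {} \<and> V2 \<noteq> {} \<and> V1 \<inter> V2 = {} \<and> V1 \<union> V2 = V \<longrightarrow>
      card {(u, v) \<in> A. u \<in> V1 \<and> v \<in> V2} \<ge> k)"

definition k_strong :: "nat \<Rightarrow> 'a set \<Rightarrow> ('a \<times> 'a) set \<Rightarrow> bool" where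
  "k_strong k V A \<longleftrightarrow> card V \<ge> k + 1 \<and>
      (\<forall>S. S \<subseteq> V \<and> card S < k \<longrightarrow> strong (V - S) (A \<inter> (V - S) \<times> (V - S)))"

definition sinv :: "nat \<Rightarrow> 'a set \<Rightarrow> ('a \<times> 'a) set \<Rightarrow> nat" where
  "sinv k V A = (LEAST p. \<exists>Xs. length Xs = p \<and> set Xs \<subseteq> Pow V \<and> k_strong k V (invert_seq A Xs))"

definition sinv' :: "nat \<Rightarrow> 'a set \<Rightarrow> ('a \<times> 'a) set \<Rightarrow> nat" where
  "sinv' k V A = (LEAST p. \<exists>Xs. length Xs = p \<and> set Xs \<subseteq> Pow V \<and> arc_strong k V (invert_seq A Xs))"

text \<open>Maxima over tournaments of order n (up to isomorphism it suffices to take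
  vertex set {0..<n}).\<close>
definition m_k :: "nat \<Rightarrow> nat \<Rightarrow> nat" where
  "m_k k n = Max {sinv k {0..<n} A | A. tournament {0..<n} A}"

definition m'_k :: "nat \<Rightarrow> nat \<Rightarrow> nat" where
  "m'_k k n = Max {sinv' k {0..<n} A | A. tournament {0..<n} A}"

definition M_k :: "nat \<Rightarrow> enat" where
  "M_k k = (SUP n\<in>{n. n \<ge> 2 * k + 1}. enat (m_k k n))"

definition M'_k :: "nat \<Rightarrow> enat" where
  "M'_k k = (SUP n\<in>{n. n \<ge> 2 * k + 1}. enat (m'_k k n))"

end

theory Submission
  imports Defs
begin

lemma rt_in_V:
  assumes "A \<subseteq> V \<times> V" "(x, y) \<in> A\<^sup>*"
  shows "y = x \<or> y \<in> V"
  using assms(2) by (induction rule: rtrancl_induct) (use assms(1) in auto)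

lemma rt_restrict:
  assumes "(v, z) \<in> A\<^sup>*" "(w, v) \<in> A\<^sup>*"
  shows "(v, z) \<in> (A \<inter> (A\<^sup>* `` {w}) \<times> (A\<^sup>* `` {w}))\<^sup>*"
  using assms
proof (induction rule: rtrancl_induct)
  case base then show ?case by simp
next
  case (step y z)
  have "(w, y) \<in> A\<^sup>*" using step by (meson rtrancl_trans)
  moreover have "(w, z) \<in> A\<^sup>*" using calculation step by (meson rtrancl.rtrancl_into_rtrancl)
  ultimately have "(y, z) \<in> A \<inter> (A\<^sup>* `` {w}) \<times> (A\<^sup>* `` {w})" using step by auto
  then show ?case using step by (meson rtrancl.rtrancl_into_rtrancl)
qed

lemma tournament_conv:
  assumes T: "tournament V A"
  shows "tournament V (A\<inverse>)"
proof -
  have D: "finite V \<and> A \<subseteq> V \<times> V \<and> (\<forall>v. (v, v) \<notin> A) \<and>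
     (\<forall>u\<in>V. \<forall>v\<in>V. u \<noteq> v \<longrightarrow> ((u, v) \<in> A \<longleftrightarrow> (v, u) \<notin> A))"
    using T unfolding tournament_def by assumption
  have "finite V \<and> A\<inverse> \<subseteq> V \<times> V \<and> (\<forall>v. (v, v) \<notin> A\<inverse>) \<and>
     (\<forall>u\<in>V. \<forall>v\<in>V. u \<noteq> v \<longrightarrow> ((u, v) \<in> A\<inverse> \<longleftrightarrow> (v, u) \<notin> A\<inverse>))"
    using D by blast
  then show ?thesis unfolding tournament_def by assumption
qed

lemma sink:
  assumes T: "tournament V A" and ne: "V \<noteq> {}"
  shows "\<exists>w\<in>V. \<forall>v\<in>V. (v, w) \<in> A\<^sup>* \<and>
     (\<forall>u. (w, u) \<notin> A\<^sup>* \<longrightarrow> u \<noteq> v \<longrightarrow> (v, w) \<in> (A \<inter> (V - {u}) \<times> (V - {u}))\<^sup>*)"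
proof -
  have fin: "finite V" and AV: "A \<subseteq> V \<times> V" and nl: "\<And>v. (v, v) \<notin> A"
    and tt: "\<And>u v. u \<in> V \<Longrightarrow> v \<in> V \<Longrightarrow> u \<noteq> v \<Longrightarrow> (u, v) \<in> A \<longleftrightarrow> (v, u) \<notin> A"
  proof -
    have D: "finite V \<and> A \<subseteq> V \<times> V \<and> (\<forall>v. (v, v) \<notin> A) \<and>
     (\<forall>u\<in>V. \<forall>v\<in>V. u \<noteq> v \<longrightarrow> ((u, v) \<in> A \<longleftrightarrow> (v, u) \<notin> A))"
      using T unfolding tournament_def by assumption
    show "finite V" using D by (rule conjunct1)
    show "A \<subseteq> V \<times> V" using D by blast
    show "\<And>v. (v, v) \<notin> A" using D by blast
    show "\<And>u v. u \<in> V \<Longrightarrow> v \<in> V \<Longrightarrow> u \<noteq> v \<Longrightarrow> (u, v) \<in> A \<longleftrightarrow> (v, u) \<notin> A"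
      using D by blast
  qed
  have finO: "finite (A\<^sup>* `` {x})" if "x \<in> V" for x
  proof -
    have "A\<^sup>* `` {x} \<subseteq> V" using rt_in_V[OF AV] that by auto
    then show ?thesis using fin finite_subset by blast
  qed
  obtain x0 where "x0 \<in> V" using ne by blast
  obtain w where wV: "w \<in> V" and wmin: "\<And>y. y \<in> V \<Longrightarrow> card (A\<^sup>* `` {w}) \<le> card (A\<^sup>* `` {y})"
    using ex_has_least_nat[of "\<lambda>x. x \<in> V" x0 "\<lambda>x. card (A\<^sup>* `` {x})"] \<open>x0 \<in> V\<close> by blast
  have OV: "A\<^sup>* `` {w} \<subseteq> V" using rt_in_V[OF AV] wV by auto
  show ?thesis
  proof (intro bexI[OF _ wV] ballI conjI allI impI)
    fix v assume vV: "v \<in> V"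
    show "(v, w) \<in> A\<^sup>*"
    proof (cases "(w, v) \<in> A\<^sup>*")
      case True
      have sub: "A\<^sup>* `` {v} \<subseteq> A\<^sup>* `` {w}"
      proof
        fix z assume "z \<in> A\<^sup>* `` {v}"
        then have "(v, z) \<in> A\<^sup>*" by simp
        then have "(w, z) \<in> A\<^sup>*" by (rule rtrancl_trans[OF True])
        then show "z \<in> A\<^sup>* `` {w}" by simp
      qed
      have "card (A\<^sup>* `` {w}) \<le> card (A\<^sup>* `` {v})" using wmin vV .
      then have "A\<^sup>* `` {v} = A\<^sup>* `` {w}" using sub finO[OF wV] by (meson card_seteq)
      then show ?thesis by auto
    next
      case False
      then have "v \<noteq> w" by auto
      moreover have "(w, v) \<notin> A" using False r_into_rtrancl by metis
      ultimately have "(v, w) \<in> A" using tt[OF vV wV] by blast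
      then show ?thesis by auto
    qed
    fix u assume nu: "(w, u) \<notin> A\<^sup>*" and uv: "u \<noteq> v"
    show "(v, w) \<in> (A \<inter> (V - {u}) \<times> (V - {u}))\<^sup>*"
    proof (cases "(w, v) \<in> A\<^sup>*")
      case True
      have sub: "A\<^sup>* `` {v} \<subseteq> A\<^sup>* `` {w}"
      proof
        fix z assume "z \<in> A\<^sup>* `` {v}"
        then have "(v, z) \<in> A\<^sup>*" by simp
        then have "(w, z) \<in> A\<^sup>*" by (rule rtrancl_trans[OF True])
        then show "z \<in> A\<^sup>* `` {w}" by simp
      qed
      have "card (A\<^sup>* `` {w}) \<le> card (A\<^sup>* `` {v})" using wmin vV .
      then have "A\<^sup>* `` {v} = A\<^sup>* `` {w}" using sub finO[OF wV] by (meson card_seteq)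
      then have "(v, w) \<in> A\<^sup>*" by auto
      then have "(v, w) \<in> (A \<inter> (A\<^sup>* `` {w}) \<times> (A\<^sup>* `` {w}))\<^sup>*" using True by (rule rt_restrict)
      moreover have "A \<inter> (A\<^sup>* `` {w}) \<times> (A\<^sup>* `` {w}) \<subseteq> A \<inter> (V - {u}) \<times> (V - {u})"
        using OV nu by auto
      ultimately show ?thesis using rtrancl_mono by (meson subsetD)
    next
      case False
      then have "v \<noteq> w" by auto
      moreover have "(w, v) \<notin> A" using False r_into_rtrancl by metis
      ultimately have "(v, w) \<in> A" using tt[OF vV wV] by blast
      moreover have "w \<noteq> u" using nu by auto
      ultimately show ?thesis using uv vV wV by auto
    qed
  qed
qed

lemma source:
  assumes T: "tournament V A" and ne: "V \<noteq> {}"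
  shows "\<exists>u\<in>V. \<forall>v\<in>V. (u, v) \<in> A\<^sup>* \<and>
     (\<forall>w. (w, u) \<notin> A\<^sup>* \<longrightarrow> w \<noteq> v \<longrightarrow> (u, v) \<in> (A \<inter> (V - {w}) \<times> (V - {w}))\<^sup>*)"
proof -
  have "tournament V (A\<inverse>)" using T by (rule tournament_conv)
  from sink[OF this ne] obtain u where uV: "u \<in> V" and
    H: "\<forall>v\<in>V. (v, u) \<in> (A\<inverse>)\<^sup>* \<and>
     (\<forall>w. (u, w) \<notin> (A\<inverse>)\<^sup>* \<longrightarrow> w \<noteq> v \<longrightarrow> (v, u) \<in> (A\<inverse> \<inter> (V - {w}) \<times> (V - {w}))\<^sup>*)" by blast
  have eq: "A\<inverse> \<inter> S \<times> S = (A \<inter> S \<times> S)\<inverse>" for S by auto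
  show ?thesis using H uV unfolding eq rtrancl_converse by auto
qed


lemma fix_one:
  assumes T: "tournament V A" and c3: "card V \<ge> 3" and ns: "\<not> strong V A"
  shows "\<exists>u\<in>V. \<exists>w\<in>V. strong V (invert A {u, w})"
proof -
  have fin: "finite V" and AV: "A \<subseteq> V \<times> V" and nl: "\<And>v. (v, v) \<notin> A"
    and tt: "\<And>u v. u \<in> V \<Longrightarrow> v \<in> V \<Longrightarrow> u \<noteq> v \<Longrightarrow> (u, v) \<in> A \<longleftrightarrow> (v, u) \<notin> A"
  proof -
    have D: "finite V \<and> A \<subseteq> V \<times> V \<and> (\<forall>v. (v, v) \<notin> A) \<and>
     (\<forall>u\<in>V. \<forall>v\<in>V. u \<noteq> v \<longrightarrow> ((u, v) \<in> A \<longleftrightarrow> (v, u) \<notin> A))"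
      using T unfolding tournament_def by assumption
    show "finite V" using D by (rule conjunct1)
    show "A \<subseteq> V \<times> V" using D by blast
    show "\<And>v. (v, v) \<notin> A" using D by blast
    show "\<And>u v. u \<in> V \<Longrightarrow> v \<in> V \<Longrightarrow> u \<noteq> v \<Longrightarrow> (u, v) \<in> A \<longleftrightarrow> (v, u) \<notin> A"
      using D by blast
  qed
  have ne: "V \<noteq> {}" using c3 by auto
  have AVV: "A \<inter> V \<times> V = A" using AV by auto
  obtain u where uV: "u \<in> V" and U: "\<forall>v\<in>V. (u, v) \<in> A\<^sup>* \<and>
     (\<forall>w. (w, u) \<notin> A\<^sup>* \<longrightarrow> w \<noteq> v \<longrightarrow> (u, v) \<in> (A \<inter> (V - {w}) \<times> (V - {w}))\<^sup>*)"
    using source[OF T ne] by blast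
  obtain w where wV: "w \<in> V" and W: "\<forall>v\<in>V. (v, w) \<in> A\<^sup>* \<and>
     (\<forall>u. (w, u) \<notin> A\<^sup>* \<longrightarrow> u \<noteq> v \<longrightarrow> (v, w) \<in> (A \<inter> (V - {u}) \<times> (V - {u}))\<^sup>*)"
    using sink[OF T ne] by blast
  have nwu: "(w, u) \<notin> A\<^sup>*"
  proof
    assume wu: "(w, u) \<in> A\<^sup>*"
    have "strong V A" unfolding strong_def AVV
    proof (intro ballI)
      fix a b assume "a \<in> V" "b \<in> V"
      then have "(a, w) \<in> A\<^sup>*" "(u, b) \<in> A\<^sup>*" using U W by blast+
      then show "(a, b) \<in> A\<^sup>*" using wu by (meson rtrancl_trans)
    qed
    then show False using ns by blast
  qed
  then have uw: "u \<noteq> w" by auto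
  moreover have "(w, u) \<notin> A" using nwu r_into_rtrancl by metis
  ultimately have uwA: "(u, w) \<in> A" using tt[OF uV wV] by blast
  define R where "R = invert A {u, w} \<inter> V \<times> V"
  have s1: "A \<inter> (V - {u}) \<times> (V - {u}) \<subseteq> R" unfolding R_def invert_def using nl by auto
  have s2: "A \<inter> (V - {w}) \<times> (V - {w}) \<subseteq> R" unfolding R_def invert_def using nl by auto
  have wuR: "(w, u) \<in> R" unfolding R_def invert_def using uwA uV wV by auto
  obtain x where xV: "x \<in> V" and xu: "x \<noteq> u" and xw: "x \<noteq> w"
  proof -
    have "card {u, w} \<le> 2" by (simp add: card_insert_le_m1)
    have "\<not> V \<subseteq> {u, w}"
    proof
      assume "V \<subseteq> {u, w}"
      then have "card V \<le> card {u, w}" by (intro card_mono) auto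
      then show False using c3 \<open>card {u, w} \<le> 2\<close> by linarith
    qed
    then show ?thesis using that by blast
  qed
  have m1: "(A \<inter> (V - {u}) \<times> (V - {u}))\<^sup>* \<subseteq> R\<^sup>*" using s1 by (rule rtrancl_mono)
  have m2: "(A \<inter> (V - {w}) \<times> (V - {w}))\<^sup>* \<subseteq> R\<^sup>*" using s2 by (rule rtrancl_mono)
  have Uh: "\<And>v w'. v \<in> V \<Longrightarrow> (w', u) \<notin> A\<^sup>* \<Longrightarrow> w' \<noteq> v \<Longrightarrow>
      (u, v) \<in> (A \<inter> (V - {w'}) \<times> (V - {w'}))\<^sup>*" using U by blast
  have Wh: "\<And>v u'. v \<in> V \<Longrightarrow> (w, u') \<notin> A\<^sup>* \<Longrightarrow> u' \<noteq> v \<Longrightarrow>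
      (v, w) \<in> (A \<inter> (V - {u'}) \<times> (V - {u'}))\<^sup>*" using W by blast
  have ux: "(u, x) \<in> R\<^sup>*" using m2 Uh[OF xV nwu not_sym[OF xw]] by (rule subsetD)
  have xw': "(x, w) \<in> R\<^sup>*" using m1 Wh[OF xV nwu not_sym[OF xu]] by (rule subsetD)
  have uwR: "(u, w) \<in> R\<^sup>*" using ux xw' by (meson rtrancl_trans)
  have toU: "(v, u) \<in> R\<^sup>*" if "v \<in> V" for v
  proof (cases "v = u")
    case False
    have "(v, w) \<in> R\<^sup>*" using m1 Wh[OF that nwu not_sym[OF False]] by (rule subsetD)
    then show ?thesis using wuR by (meson rtrancl.rtrancl_into_rtrancl)
  qed simp
  have fromU: "(u, v) \<in> R\<^sup>*" if "v \<in> V" for v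
  proof (cases "v = w")
    case False
    show ?thesis using m2 Uh[OF that nwu not_sym[OF False]] by (rule subsetD)
  qed (use uwR in simp)
  have "\<forall>a\<in>V. \<forall>b\<in>V. (a, b) \<in> R\<^sup>*"
  proof (intro ballI)
    fix a b assume "a \<in> V" "b \<in> V"
    then have "(a, u) \<in> R\<^sup>*" "(u, b) \<in> R\<^sup>*" using toU fromU by auto
    then show "(a, b) \<in> R\<^sup>*" by (rule rtrancl_trans)
  qed
  then have "strong V (invert A {u, w})" unfolding strong_def R_def by blast
  then show ?thesis using uV wV by blast
qed

lemma strong_arc:
  assumes fin: "finite V" and AV: "A \<subseteq> V \<times> V"
  shows "arc_strong 1 V A \<longleftrightarrow> strong V A"
proof
  assume as: "arc_strong 1 V A"
  show "strong V A" unfolding strong_def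
  proof (intro ballI, rule ccontr)
    fix a b assume aV: "a \<in> V" and bV: "b \<in> V" and nab: "(a, b) \<notin> (A \<inter> V \<times> V)\<^sup>*"
    define V1 where "V1 = {x \<in> V. (a, x) \<in> (A \<inter> V \<times> V)\<^sup>*}"
    have "a \<in> V1" "b \<in> V - V1" "V1 \<subseteq> V" using aV bV nab unfolding V1_def by auto
    then have p: "V1 \<noteq> {} \<and> V - V1 \<noteq> {} \<and> V1 \<inter> (V - V1) = {} \<and> V1 \<union> (V - V1) = V" by blast
    have "card {(x, y) \<in> A. x \<in> V1 \<and> y \<in> V - V1} \<ge> 1"
      using as p unfolding arc_strong_def by (elim allE[of _ V1] allE[of _ "V - V1"] impE)
    then have "{(x, y) \<in> A. x \<in> V1 \<and> y \<in> V - V1} \<noteq> {}" by (metis card.empty not_one_le_zero)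
    then obtain x y where "(x, y) \<in> A" "x \<in> V1" "y \<in> V - V1" by blast
    then have "y \<in> V" "x \<in> V" "(a, x) \<in> (A \<inter> V \<times> V)\<^sup>*" "y \<notin> V1"
      using AV unfolding V1_def by auto
    moreover have "(x, y) \<in> A \<inter> V \<times> V" using calculation \<open>(x, y) \<in> A\<close> by blast
    ultimately have "(a, y) \<in> (A \<inter> V \<times> V)\<^sup>*" "y \<in> V" "y \<notin> V1"
      by (meson rtrancl.rtrancl_into_rtrancl)+
    then show False unfolding V1_def by blast
  qed
next
  assume st: "strong V A"
  show "arc_strong 1 V A" unfolding arc_strong_def
  proof (intro allI impI)
    fix V1 V2 assume H: "V1 \<noteq> {} \<and> V2 \<noteq> {} \<and> V1 \<inter> V2 = {} \<and> V1 \<union> V2 = V"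
    then obtain a b where a: "a \<in> V1" and b: "b \<in> V2" by blast
    have "(a, b) \<in> (A \<inter> V \<times> V)\<^sup>*" using st a b H unfolding strong_def by blast
    have "b \<notin> V1 \<longrightarrow> (\<exists>x y. (x, y) \<in> A \<and> x \<in> V1 \<and> y \<notin> V1)"
      using \<open>(a, b) \<in> (A \<inter> V \<times> V)\<^sup>*\<close>
    proof (induction rule: rtrancl_induct)
      case base then show ?case using a by blast
    next
      case (step y z)
      show ?case
      proof
        assume zn: "z \<notin> V1"
        show "\<exists>x y. (x, y) \<in> A \<and> x \<in> V1 \<and> y \<notin> V1"
        proof (cases "y \<in> V1")
          case True
          have "(y, z) \<in> A" using step.hyps(2) by simp
          then show ?thesis using True zn by blast
        next
          case False
          then show ?thesis using step.IH by simp
        qed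
      qed
    qed
    then have "\<exists>x y. (x, y) \<in> A \<and> x \<in> V1 \<and> y \<notin> V1" using b H by blast
    then obtain x y where "(x, y) \<in> A" "x \<in> V1" "y \<notin> V1" by blast
    define S where "S = {(u, v) \<in> A. u \<in> V1 \<and> v \<in> V2}"
    have xyS: "(x, y) \<in> S" proof -
      have "y \<in> V" using \<open>(x, y) \<in> A\<close> AV by blast
      then have "y \<in> V2" using \<open>y \<notin> V1\<close> H by blast
      then show ?thesis unfolding S_def using \<open>(x, y) \<in> A\<close> \<open>x \<in> V1\<close> by simp
    qed
    have "S \<subseteq> V \<times> V" unfolding S_def using AV by auto
    then have "finite S" using fin by (meson finite_SigmaI finite_subset)
    then have "card S > 0" using xyS card_gt_0_iff by blast
    then show "card {(u, v) \<in> A. u \<in> V1 \<and> v \<in> V2} \<ge> 1" unfolding S_def by simp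
  qed
qed


lemma invert_sub:
  assumes "A \<subseteq> V \<times> V" shows "invert A X \<subseteq> V \<times> V"
  using assms unfolding invert_def by blast

lemma kstrong1:
  assumes fin: "finite V"
  shows "k_strong 1 V B \<longleftrightarrow> card V \<ge> 2 \<and> strong V B"
proof -
  have "(\<forall>S. S \<subseteq> V \<and> card S < 1 \<longrightarrow> strong (V - S) (B \<inter> (V - S) \<times> (V - S)))
        \<longleftrightarrow> strong V (B \<inter> V \<times> V)"
  proof
    assume "\<forall>S. S \<subseteq> V \<and> card S < 1 \<longrightarrow> strong (V - S) (B \<inter> (V - S) \<times> (V - S))"
    then have "strong (V - {}) (B \<inter> (V - {}) \<times> (V - {}))" by (metis card.empty empty_subsetI less_one)
    then show "strong V (B \<inter> V \<times> V)" by simp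
  next
    assume st: "strong V (B \<inter> V \<times> V)"
    show "\<forall>S. S \<subseteq> V \<and> card S < 1 \<longrightarrow> strong (V - S) (B \<inter> (V - S) \<times> (V - S))"
    proof (intro allI impI)
      fix S assume H: "S \<subseteq> V \<and> card S < 1"
      then have "finite S" using fin finite_subset by blast
      then have "S = {}" using H by simp
      then show "strong (V - S) (B \<inter> (V - S) \<times> (V - S))" using st by simp
    qed
  qed
  moreover have "strong V (B \<inter> V \<times> V) \<longleftrightarrow> strong V B" unfolding strong_def
    by (simp add: Int_assoc)
  ultimately show ?thesis unfolding k_strong_def by (simp add: numeral_2_eq_2)
qed

lemma main_one:
  assumes T: "tournament V A" and c3: "card V \<ge> 3"
  shows "(strong V A \<longrightarrow> sinv 1 V A = 0 \<and> sinv' 1 V A = 0)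
       \<and> (\<not> strong V A \<longrightarrow> sinv 1 V A = 1 \<and> sinv' 1 V A = 1)"
proof -
  have fin: "finite V" and AV: "A \<subseteq> V \<times> V" using T unfolding tournament_def by blast+
  have c2: "card V \<ge> 2" using c3 by simp
  have seq0: "invert_seq A [] = A" unfolding invert_seq_def by simp
  have seq1: "invert_seq A [X] = invert A X" for X unfolding invert_seq_def by simp
  have len0: "Xs = []" if "length Xs = 0" for Xs :: "'a set list" using that by simp
  show ?thesis
  proof (intro conjI impI)
    assume st: "strong V A"
    have K: "k_strong 1 V A" using kstrong1[OF fin] c2 st by blast
    show "sinv 1 V A = 0" unfolding sinv_def
      by (rule Least_eq_0, rule exI[of _ "[]"]) (use K in \<open>simp add: seq0\<close>)
    show "sinv' 1 V A = 0" unfolding sinv'_def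
      by (rule Least_eq_0, rule exI[of _ "[]"]) (use st strong_arc[OF fin AV] in \<open>simp add: seq0\<close>)
  next
    assume ns: "\<not> strong V A"
    obtain u w where uV: "u \<in> V" and wV: "w \<in> V" and st: "strong V (invert A {u, w})"
      using fix_one[OF T c3 ns] by blast
    have sub: "set [{u, w}] \<subseteq> Pow V" using uV wV by simp
    have IS: "invert A {u, w} \<subseteq> V \<times> V" using AV by (rule invert_sub)
    show "sinv 1 V A = 1" unfolding sinv_def
    proof (rule Least_equality)
      show "\<exists>Xs. length Xs = 1 \<and> set Xs \<subseteq> Pow V \<and> k_strong 1 V (invert_seq A Xs)"
      proof -
        have K: "k_strong 1 V (invert A {u, w})" using kstrong1[OF fin] c2 st by blast
        show ?thesis using sub K by (intro exI[of _ "[{u, w}]"]) (simp add: seq1)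
      qed
    next
      fix y assume "\<exists>Xs. length Xs = y \<and> set Xs \<subseteq> Pow V \<and> k_strong 1 V (invert_seq A Xs)"
      then obtain Xs where "length Xs = y" "k_strong 1 V (invert_seq A Xs)" by blast
      moreover have "\<not> k_strong 1 V A" using kstrong1[OF fin] ns by blast
      ultimately show "1 \<le> y" using seq0 by (cases Xs) auto
    qed
    show "sinv' 1 V A = 1" unfolding sinv'_def
    proof (rule Least_equality)
      show "\<exists>Xs. length Xs = 1 \<and> set Xs \<subseteq> Pow V \<and> arc_strong 1 V (invert_seq A Xs)"
      proof -
        have K: "arc_strong 1 V (invert A {u, w})" using strong_arc[OF fin IS] st by blast
        show ?thesis using sub K by (intro exI[of _ "[{u, w}]"]) (simp add: seq1)
      qed
    next
      fix y assume "\<exists>Xs. length Xs = y \<and> set Xs \<subseteq> Pow V \<and> arc_strong 1 V (invert_seq A Xs)"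
      then obtain Xs where "length Xs = y" "arc_strong 1 V (invert_seq A Xs)" by blast
      moreover have "\<not> arc_strong 1 V A" using strong_arc[OF fin AV] ns by blast
      ultimately show "1 \<le> y" using seq0 by (cases Xs) auto
    qed
  qed
qed

lemma rt_mono_le:
  assumes "(a, b) \<in> r\<^sup>*" "r \<subseteq> {(i, j). (i::nat) < j}"
  shows "a \<le> b"
  using assms(1) by (induction rule: rtrancl_induct) (use assms(2) in auto)

lemma trans_tourn:
  fixes n :: nat
  assumes "n \<ge> 3"
  shows "tournament {0..<n} {(i, j). i < j \<and> j < n} \<and> \<not> strong {0..<n} {(i, j). i < j \<and> j < n}"
proof
  show "tournament {0..<n} {(i, j). i < j \<and> j < n}" unfolding tournament_def by auto
  show "\<not> strong {0..<n} {(i, j). i < j \<and> j < n}"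
  proof
    assume "strong {0..<n} {(i, j). i < j \<and> j < n}"
    then have "(1, 0) \<in> ({(i, j). i < j \<and> j < n} \<inter> {0..<n} \<times> {0..<n})\<^sup>*"
      unfolding strong_def using assms by simp
    then have "(1::nat) \<le> 0" by (rule rt_mono_le) auto
    then show False by simp
  qed
qed

lemma mk_one:
  assumes n3: "n \<ge> 3"
  shows "m_k 1 n = 1 \<and> m'_k 1 n = 1"
proof -
  have cn: "card {0..<n} \<ge> 3" using n3 by simp
  define B where "B = {(i, j). i < j \<and> j < n}"
  have TB: "tournament {0..<n} B" and nB: "\<not> strong {0..<n} B" using trans_tourn[OF n3] unfolding B_def by blast+
  have all: "sinv 1 {0..<n} A \<le> 1 \<and> sinv' 1 {0..<n} A \<le> 1" if "tournament {0..<n} A" for A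
    using main_one[OF that cn] by (cases "strong {0..<n} A") auto
  have B1: "sinv 1 {0..<n} B = 1 \<and> sinv' 1 {0..<n} B = 1" using main_one[OF TB cn] nB by blast
  have S1: "{sinv 1 {0..<n} A | A. tournament {0..<n} A} \<subseteq> {0, 1}" using all by fastforce
  have S2: "{sinv' 1 {0..<n} A | A. tournament {0..<n} A} \<subseteq> {0, 1}" using all by fastforce
  have "Max {sinv 1 {0..<n} A | A. tournament {0..<n} A} = 1"
  proof (rule Max_eqI)
    show "finite {sinv 1 {0..<n} A | A. tournament {0..<n} A}" using S1 finite_subset by blast
    show "y \<le> 1" if "y \<in> {sinv 1 {0..<n} A | A. tournament {0..<n} A}" for y using that S1 by auto
    show "1 \<in> {sinv 1 {0..<n} A | A. tournament {0..<n} A}" using B1 TB by force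
  qed
  moreover have "Max {sinv' 1 {0..<n} A | A. tournament {0..<n} A} = 1"
  proof (rule Max_eqI)
    show "finite {sinv' 1 {0..<n} A | A. tournament {0..<n} A}" using S2 finite_subset by blast
    show "y \<le> 1" if "y \<in> {sinv' 1 {0..<n} A | A. tournament {0..<n} A}" for y using that S2 by auto
    show "1 \<in> {sinv' 1 {0..<n} A | A. tournament {0..<n} A}" using B1 TB by force
  qed
  ultimately show ?thesis unfolding m_k_def m'_k_def by simp
qed

lemma Mk_one: "M_k 1 = 1 \<and> M'_k 1 = 1"
proof -
  have ne: "{n::nat. n \<ge> 2 * 1 + 1} \<noteq> {}" by auto
  have "M_k 1 = (SUP n\<in>{n::nat. n \<ge> 2 * 1 + 1}. (1::enat))" unfolding M_k_def
    by (rule SUP_cong) (use mk_one in \<open>auto simp: one_enat_def\<close>)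
  moreover have "M'_k 1 = (SUP n\<in>{n::nat. n \<ge> 2 * 1 + 1}. (1::enat))" unfolding M'_k_def
    by (rule SUP_cong) (use mk_one in \<open>auto simp: one_enat_def\<close>)
  ultimately show ?thesis using ne by simp
qed

theorem proposition5p1:
  fixes V :: "'a set" and A :: "('a \<times> 'a) set"
  assumes "tournament V A" and "card V \<ge> 3"
  shows "(strong V A \<longrightarrow> sinv 1 V A = 0 \<and> sinv' 1 V A = 0)
       \<and> (\<not> strong V A \<longrightarrow> sinv 1 V A = 1 \<and> sinv' 1 V A = 1)
       \<and> (\<forall>n\<ge>3. m_k 1 n = 1 \<and> m'_k 1 n = 1)
       \<and> M_k 1 = 1 \<and> M'_k 1 = 1"
  using main_one[OF assms] mk_one Mk_one by blast

end
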